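(* Let $\mathcal G=(V,E,r)$ be a graph. The monoid of agglomerations $\mathbf A(\mathcal G)$ is a finitely generated reduced Krull monoid, and its divisor theory has $3|E|+\iota$ prime divisors, where $\iota$ is the number of isolated vertices of $\mathcal G$.
   Context: A graph $\mathcal G=(V,E,r)$ consists of a finite vertex set $V$, a finite edge set $E$ disjoint from $V$, and a map $r$ assigning to each edge a two-element subset of $V$; multiple edges allowed, no loops. An isolated vertex is one incident with no edge. An agglomeration on $\mathcal G$ is a function $a\colon V\cup E\to\mathbb N_0$ with $a(v)\ge a(e)$ whenever $v$ is incident with $e$; $\mathbf A(\mathcal G)$ is the monoid of agglomerations under pointwise addition. A monoid homomorphism $\varphi\colon H\to D$ is a divisor homomorphism if $\varphi(a)$ being a summand of $\varphi(b)$ in $D$ implies $a$ is a summand of $b$ in $H$. A cancellative monoid is Krull if it has a divisor homomorphism into a free monoid $\mathbb N_0^{(I)}$. A divisor theory is a divisor homomorphism $\varphi\colon H\to\mathbb N_0^{(I)}$ such that every standard basis vector $\vec e_i$ equals the pointwise minimum of finitely many $\varphi(a_1),\dots,\varphi(a_k)$ with $a_j\in H$; divisor theories are unique up to isomorphism, and the number of prime divisors is the cardinality of $I$. *)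

theory Defs
  imports Main "HOL-Library.Function_Algebras"
begin

text \<open>A graph (V,E,r): V and E are finite, disjointness of V and E is encoded by
  using the sum type 'v + 'e for V \<union> E; r assigns to each edge a 2-element subset of V.\<close>

definition is_graph :: "'v set \<Rightarrow> 'e set \<Rightarrow> ('e \<Rightarrow> 'v set) \<Rightarrow> bool" where
  "is_graph V E r \<longleftrightarrow> finite V \<and> finite E \<and> (\<forall>e\<in>E. r e \<subseteq> V \<and> card (r e) = 2)"

definition isolated_vertices :: "'v set \<Rightarrow> 'e set \<Rightarrow> ('e \<Rightarrow> 'v set) \<Rightarrow> 'v set" where
  "isolated_vertices V E r = {v \<in> V. \<forall>e\<in>E. v \<notin> r e}"

text \<open>Agglomerations: functions V \<union> E \<rightarrow> N_0 (represented as functions on the sum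
  type that vanish outside V \<union> E) with a(v) \<ge> a(e) whenever v is incident with e.\<close>

definition agglomerations :: "'v set \<Rightarrow> 'e set \<Rightarrow> ('e \<Rightarrow> 'v set) \<Rightarrow> ('v + 'e \<Rightarrow> nat) set" where
  "agglomerations V E r =
     {a. (\<forall>x. x \<notin> Inl ` V \<union> Inr ` E \<longrightarrow> a x = 0) \<and>
         (\<forall>e\<in>E. \<forall>v\<in>r e. a (Inr e) \<le> a (Inl v))}"

definition submonoid :: "'m::comm_monoid_add set \<Rightarrow> bool" where
  "submonoid H \<longleftrightarrow> 0 \<in> H \<and> (\<forall>a\<in>H. \<forall>b\<in>H. a + b \<in> H)"

inductive_set generated_monoid :: "'m::comm_monoid_add set \<Rightarrow> 'm set" for S where
  gen_zero: "0 \<in> generated_monoid S"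
| gen_add: "s \<in> S \<Longrightarrow> x \<in> generated_monoid S \<Longrightarrow> s + x \<in> generated_monoid S"

definition finitely_generated_monoid :: "'m::comm_monoid_add set \<Rightarrow> bool" where
  "finitely_generated_monoid H \<longleftrightarrow> (\<exists>S. finite S \<and> S \<subseteq> H \<and> generated_monoid S = H)"

definition reduced_monoid :: "'m::comm_monoid_add set \<Rightarrow> bool" where
  "reduced_monoid H \<longleftrightarrow> (\<forall>a\<in>H. (\<exists>b\<in>H. a + b = 0) \<longrightarrow> a = 0)"

definition cancellative_monoid :: "'m::comm_monoid_add set \<Rightarrow> bool" where
  "cancellative_monoid H \<longleftrightarrow> (\<forall>a\<in>H. \<forall>b\<in>H. \<forall>c\<in>H. a + b = a + c \<longrightarrow> b = c)"

definition free_monoid :: "'i set \<Rightarrow> ('i \<Rightarrow> nat) set" where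
  "free_monoid I = {f. finite {i. f i \<noteq> 0} \<and> {i. f i \<noteq> 0} \<subseteq> I}"

definition monoid_hom_into :: "'m::comm_monoid_add set \<Rightarrow> 'n::comm_monoid_add set \<Rightarrow> ('m \<Rightarrow> 'n) \<Rightarrow> bool" where
  "monoid_hom_into H D \<phi> \<longleftrightarrow> (\<forall>a\<in>H. \<phi> a \<in> D) \<and> \<phi> 0 = 0 \<and>
      (\<forall>a\<in>H. \<forall>b\<in>H. \<phi> (a + b) = \<phi> a + \<phi> b)"

definition divisor_hom :: "'m::comm_monoid_add set \<Rightarrow> 'n::comm_monoid_add set \<Rightarrow> ('m \<Rightarrow> 'n) \<Rightarrow> bool" where
  "divisor_hom H D \<phi> \<longleftrightarrow> monoid_hom_into H D \<phi> \<and>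
      (\<forall>a\<in>H. \<forall>b\<in>H. (\<exists>z\<in>D. \<phi> b = \<phi> a + z) \<longrightarrow> (\<exists>c\<in>H. b = a + c))"

text \<open>Krull monoid, with the index set I of the free monoid taken inside the type 'i
  (given by the type argument).\<close>

definition krull_monoid :: "'i itself \<Rightarrow> 'm::comm_monoid_add set \<Rightarrow> bool" where
  "krull_monoid (_::'i itself) H \<longleftrightarrow> submonoid H \<and> cancellative_monoid H \<and>
      (\<exists>(I::'i set) \<phi>. divisor_hom H (free_monoid I) \<phi>)"

definition unit_vec :: "'i \<Rightarrow> 'i \<Rightarrow> nat" where
  "unit_vec i = (\<lambda>j. if j = i then 1 else 0)"

definition divisor_theory :: "'m::comm_monoid_add set \<Rightarrow> 'i set \<Rightarrow> ('m \<Rightarrow> 'i \<Rightarrow> nat) \<Rightarrow> bool" where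
  "divisor_theory H I \<phi> \<longleftrightarrow> divisor_hom H (free_monoid I) \<phi> \<and>
      (\<forall>i\<in>I. \<exists>A. finite A \<and> A \<noteq> {} \<and> A \<subseteq> H \<and>
                 (\<lambda>j. Min ((\<lambda>a. \<phi> a j) ` A)) = unit_vec i)"

end

theory Submission
  imports Defs
begin

definition gcdm :: "('m \<Rightarrow> 'i \<Rightarrow> nat) \<Rightarrow> 'm set \<Rightarrow> 'i \<Rightarrow> nat" where
  "gcdm \<phi> A = (\<lambda>j. Min ((\<lambda>a. \<phi> a j) ` A))"

definition dvdH :: "'m::comm_monoid_add set \<Rightarrow> 'm \<Rightarrow> 'm \<Rightarrow> bool" where
  "dvdH H a b \<longleftrightarrow> (\<exists>c\<in>H. b = a + c)"

lemma divisor_theory_alt: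
  "divisor_theory H I \<phi> \<longleftrightarrow> divisor_hom H (free_monoid I) \<phi> \<and>
      (\<forall>i\<in>I. \<exists>A. finite A \<and> A \<noteq> {} \<and> A \<subseteq> H \<and> gcdm \<phi> A = unit_vec i)"
  unfolding divisor_theory_def gcdm_def by simp

lemma dh_iff:
  "divisor_hom H (free_monoid P) \<phi> \<longleftrightarrow> monoid_hom_into H (free_monoid P) \<phi> \<and>
     (\<forall>a\<in>H. \<forall>b\<in>H. \<phi> a \<le> \<phi> b \<longrightarrow> dvdH H a b)"
proof
  assume d: "divisor_hom H (free_monoid P) \<phi>"
  then have h: "monoid_hom_into H (free_monoid P) \<phi>" by (simp add: divisor_hom_def)
  moreover have "dvdH H a b" if "a \<in> H" "b \<in> H" "\<phi> a \<le> \<phi> b" for a b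
  proof -
    define z where "z = (\<lambda>j. \<phi> b j - \<phi> a j)"
    have "\<phi> b \<in> free_monoid P" using h that by (simp add: monoid_hom_into_def)
    then have "z \<in> free_monoid P" unfolding free_monoid_def z_def
      by (auto elim: finite_subset[rotated])
    moreover have "\<phi> b = \<phi> a + z" using that(3) by (auto simp: z_def fun_eq_iff le_fun_def)
    ultimately show ?thesis using d that unfolding divisor_hom_def dvdH_def by blast
  qed
  ultimately show "monoid_hom_into H (free_monoid P) \<phi> \<and>
     (\<forall>a\<in>H. \<forall>b\<in>H. \<phi> a \<le> \<phi> b \<longrightarrow> dvdH H a b)" by blast
next
  assume a: "monoid_hom_into H (free_monoid P) \<phi> \<and>
     (\<forall>a\<in>H. \<forall>b\<in>H. \<phi> a \<le> \<phi> b \<longrightarrow> dvdH H a b)"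
  show "divisor_hom H (free_monoid P) \<phi>"
    unfolding divisor_hom_def using a by (auto simp: dvdH_def le_fun_def)
qed

lemma dvdH_le:
  assumes "monoid_hom_into H D \<phi>" "a \<in> H" "dvdH H a b"
  shows "\<phi> a \<le> (\<phi> b :: 'i \<Rightarrow> nat)"
  using assms unfolding dvdH_def monoid_hom_into_def by (auto simp: le_fun_def)

lemma dh_le_iff:
  assumes "divisor_hom H (free_monoid P) \<phi>" "a \<in> H" "b \<in> H"
  shows "\<phi> a \<le> \<phi> b \<longleftrightarrow> dvdH H a b"
  using assms dh_iff dvdH_le by metis

lemma approx1:
  assumes dt: "divisor_theory H P \<phi>" and sm: "submonoid H" and q: "q \<in> P"
  shows "\<exists>w\<in>H. k \<le> \<phi> w q \<and> \<phi> w p \<le> (if p = q then k else 0)"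
proof (induction k)
  case 0
  have "\<phi> 0 = 0" "0 \<in> H" using dt sm
    by (auto simp: divisor_theory_def divisor_hom_def monoid_hom_into_def submonoid_def)
  then show ?case by (intro bexI[of _ 0]) auto
next
  case (Suc k)
  then obtain w where w: "w \<in> H" "k \<le> \<phi> w q" "\<phi> w p \<le> (if p = q then k else 0)" by blast
  obtain A where A: "finite A" "A \<noteq> {}" "A \<subseteq> H" "gcdm \<phi> A = unit_vec q"
    using dt q unfolding divisor_theory_alt by blast
  have "gcdm \<phi> A p \<in> (\<lambda>a. \<phi> a p) ` A" unfolding gcdm_def using A by (simp add: Min_in)
  then obtain x where x0: "x \<in> A" "\<phi> x p = gcdm \<phi> A p" by (metis imageE)
  then have x: "x \<in> A" "\<phi> x p = unit_vec q p" using A(4) by auto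
  have "gcdm \<phi> A q \<le> \<phi> x q" unfolding gcdm_def using A x by simp
  then have xq: "1 \<le> \<phi> x q" using A(4) by (simp add: unit_vec_def)
  have hom: "\<phi> (x + w) = \<phi> x + \<phi> w" using dt x A w
    by (auto simp: divisor_theory_def divisor_hom_def monoid_hom_into_def)
  have "x + w \<in> H" using sm x A w by (auto simp: submonoid_def)
  moreover have "Suc k \<le> \<phi> (x + w) q" using hom xq w by simp
  moreover have "\<phi> (x + w) p \<le> (if p = q then Suc k else 0)"
    using hom x w by (auto simp: unit_vec_def)
  ultimately show ?case by blast
qed

lemma approx:
  assumes dt: "divisor_theory H P \<phi>" and sm: "submonoid H"
  shows "finite S \<Longrightarrow> S \<subseteq> P \<Longrightarrow> (\<forall>j. j \<notin> S \<longrightarrow> \<gamma> j = 0) \<Longrightarrow>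
     \<exists>d\<in>H. \<gamma> \<le> \<phi> d \<and> \<phi> d p \<le> \<gamma> p"
proof (induction S arbitrary: \<gamma> rule: finite_induct)
  case empty
  have "\<phi> 0 = 0" "0 \<in> H" using dt sm
    by (auto simp: divisor_theory_def divisor_hom_def monoid_hom_into_def submonoid_def)
  moreover have "\<gamma> = 0" using empty by (auto simp: fun_eq_iff)
  ultimately show ?case by (intro bexI[of _ 0]) auto
next
  case (insert q S)
  define \<gamma>' where "\<gamma>' = \<gamma>(q := 0)"
  have "\<forall>j. j \<notin> S \<longrightarrow> \<gamma>' j = 0" using insert.prems by (auto simp: \<gamma>'_def)
  then obtain d where d: "d \<in> H" "\<gamma>' \<le> \<phi> d" "\<phi> d p \<le> \<gamma>' p" using insert.IH[of \<gamma>'] insert.prems(1) by auto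
  obtain w where w: "w \<in> H" "\<gamma> q \<le> \<phi> w q" "\<phi> w p \<le> (if p = q then \<gamma> q else 0)"
    using approx1[OF dt sm, of q "\<gamma> q" p] insert.prems by auto
  have hom: "\<phi> (d + w) = \<phi> d + \<phi> w" using dt d w
    by (auto simp: divisor_theory_def divisor_hom_def monoid_hom_into_def)
  have "d + w \<in> H" using sm d w by (auto simp: submonoid_def)
  moreover have "\<gamma> \<le> \<phi> (d + w)" unfolding hom le_fun_def
  proof
    fix j
    have dj: "\<gamma>' j \<le> \<phi> d j" using d(2) by (simp add: le_fun_def)
    show "\<gamma> j \<le> (\<phi> d + \<phi> w) j"
    proof (cases "j = q")
      case True then show ?thesis using w(2) by simp
    next
      case False then have "\<gamma> j = \<gamma>' j" by (simp add: \<gamma>'_def)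
      then show ?thesis using dj by simp
    qed
  qed
  moreover have "\<phi> (d + w) p \<le> \<gamma> p"
  proof (cases "p = q")
    case True
    then have "\<phi> d p = 0" using d(3) by (simp add: \<gamma>'_def)
    then show ?thesis using hom w(3) True by simp
  next
    case False
    then have "\<phi> w p = 0" "\<gamma>' p = \<gamma> p" using w(3) by (auto simp: \<gamma>'_def)
    then show ?thesis using hom d(3) by simp
  qed
  ultimately show ?case by blast
qed


lemma dt_hom:
  assumes "divisor_theory H P \<phi>"
  shows "monoid_hom_into H (free_monoid P) \<phi>" "divisor_hom H (free_monoid P) \<phi>"
  using assms by (auto simp: divisor_theory_def divisor_hom_def)

lemma key_char:
  assumes dt: "divisor_theory H P \<phi>" and sm: "submonoid H"
    and A: "finite A" "A \<noteq> {}" "A \<subseteq> H" and b: "b \<in> H"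
  shows "gcdm \<phi> A \<le> \<phi> b \<longleftrightarrow>
     (\<forall>c\<in>H. \<forall>d\<in>H. (\<forall>a\<in>A. dvdH H c (a + d)) \<longrightarrow> dvdH H c (b + d))"
proof -
  have hom: "\<And>x y. x \<in> H \<Longrightarrow> y \<in> H \<Longrightarrow> \<phi> (x + y) = \<phi> x + \<phi> y"
    using dt_hom(1)[OF dt] by (simp add: monoid_hom_into_def)
  have cl: "\<And>x y. x \<in> H \<Longrightarrow> y \<in> H \<Longrightarrow> x + y \<in> H" using sm by (simp add: submonoid_def)
  have dv: "\<And>x y. x \<in> H \<Longrightarrow> y \<in> H \<Longrightarrow> dvdH H x y \<longleftrightarrow> \<phi> x \<le> \<phi> y"
    using dh_le_iff[OF dt_hom(2)[OF dt]] by metis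
  have minle: "\<And>a j. a \<in> A \<Longrightarrow> gcdm \<phi> A j \<le> \<phi> a j" unfolding gcdm_def using A by simp
  have minin: "\<And>j. \<exists>a\<in>A. gcdm \<phi> A j = \<phi> a j"
  proof -
    fix j
    have "gcdm \<phi> A j \<in> (\<lambda>a. \<phi> a j) ` A" unfolding gcdm_def using A by simp
    then show "\<exists>a\<in>A. gcdm \<phi> A j = \<phi> a j" by auto
  qed
  show ?thesis
  proof
    assume g: "gcdm \<phi> A \<le> \<phi> b"
    show "\<forall>c\<in>H. \<forall>d\<in>H. (\<forall>a\<in>A. dvdH H c (a + d)) \<longrightarrow> dvdH H c (b + d)"
    proof (intro ballI impI)
      fix c d assume c: "c \<in> H" and d: "d \<in> H" and all: "\<forall>a\<in>A. dvdH H c (a + d)"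
      have "\<phi> c \<le> \<phi> (b + d)" unfolding hom[OF b d] le_fun_def
      proof
        fix j
        obtain a where a: "a \<in> A" "gcdm \<phi> A j = \<phi> a j" using minin by blast
        have "\<phi> c \<le> \<phi> (a + d)" using all a A c d dv cl by blast
        then have "\<phi> c j \<le> \<phi> a j + \<phi> d j" using hom a A d by (auto simp: le_fun_def)
        moreover have "gcdm \<phi> A j \<le> \<phi> b j" using g by (simp add: le_fun_def)
        ultimately show "\<phi> c j \<le> (\<phi> b + \<phi> d) j" using a by simp
      qed
      then show "dvdH H c (b + d)" using dv c cl b d by blast
    qed
  next
    assume R: "\<forall>c\<in>H. \<forall>d\<in>H. (\<forall>a\<in>A. dvdH H c (a + d)) \<longrightarrow> dvdH H c (b + d)"
    obtain a0 where a0: "a0 \<in> A" using A by blast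
    define \<gamma> where "\<gamma> = (\<lambda>j. \<phi> a0 j - gcdm \<phi> A j)"
    have fa0: "\<phi> a0 \<in> free_monoid P" using dt_hom(1)[OF dt] a0 A by (auto simp: monoid_hom_into_def)
    have gfin: "finite {j. \<gamma> j \<noteq> 0}" "{j. \<gamma> j \<noteq> 0} \<subseteq> P"
      using fa0 unfolding free_monoid_def \<gamma>_def by (auto elim: finite_subset[rotated])
    show "gcdm \<phi> A \<le> \<phi> b" unfolding le_fun_def
    proof
      fix p
      obtain d where d: "d \<in> H" "\<gamma> \<le> \<phi> d" "\<phi> d p \<le> \<gamma> p"
        using approx[OF dt sm gfin, of \<gamma> p] by auto
      have "\<forall>a\<in>A. dvdH H a0 (a + d)"
      proof
        fix a assume a: "a \<in> A"
        have "\<phi> a0 \<le> \<phi> (a + d)" unfolding hom[OF subsetD[OF A(3) a] d(1)] le_fun_def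
        proof
          fix j
          have "gcdm \<phi> A j \<le> \<phi> a j" "\<gamma> j \<le> \<phi> d j" using minle[OF a] d(2) by (auto simp: le_fun_def)
          then show "\<phi> a0 j \<le> (\<phi> a + \<phi> d) j" by (simp add: \<gamma>_def)
        qed
        then show "dvdH H a0 (a + d)" using dv a a0 A d cl by blast
      qed
      then have "dvdH H a0 (b + d)" using R a0 A d by blast
      then have "\<phi> a0 \<le> \<phi> (b + d)" using dv a0 A d b cl by blast
      then have "\<phi> a0 p \<le> \<phi> b p + \<phi> d p" using hom[OF b d(1)] by (simp add: le_fun_def)
      moreover have "gcdm \<phi> A p \<le> \<phi> a0 p" using minle[OF a0] .
      ultimately show "gcdm \<phi> A p \<le> \<phi> b p" using d(3) by (simp add: \<gamma>_def)
    qed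
  qed
qed

lemma gcdm_le_gcdm:
  assumes "finite A" "A \<noteq> {}"
  shows "G \<le> gcdm \<phi> A \<longleftrightarrow> (\<forall>a\<in>A. G \<le> \<phi> a)"
  using assms by (auto simp: gcdm_def le_fun_def)

lemma equiv_dt:
  assumes d1: "divisor_theory H P \<phi>" and d2: "divisor_theory H Q \<psi>" and sm: "submonoid H"
    and A: "finite A" "A \<noteq> {}" "A \<subseteq> H" and B: "finite B" "B \<noteq> {}" "B \<subseteq> H"
  shows "gcdm \<phi> A \<le> gcdm \<phi> B \<longleftrightarrow> gcdm \<psi> A \<le> gcdm \<psi> B"
proof -
  have "gcdm \<phi> A \<le> gcdm \<phi> B \<longleftrightarrow> (\<forall>b\<in>B. gcdm \<phi> A \<le> \<phi> b)" using gcdm_le_gcdm[OF B(1,2)] .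
  also have "\<dots> \<longleftrightarrow> (\<forall>b\<in>B. gcdm \<psi> A \<le> \<psi> b)"
    using key_char[OF d1 sm A] key_char[OF d2 sm A] B(3) by blast
  also have "\<dots> \<longleftrightarrow> gcdm \<psi> A \<le> gcdm \<psi> B" using gcdm_le_gcdm[OF B(1,2), of "gcdm \<psi> A" \<psi>] by (rule sym)
  finally show ?thesis .
qed

lemma equiv_dt0:
  assumes d1: "divisor_theory H P \<phi>" and d2: "divisor_theory H Q \<psi>" and sm: "submonoid H"
    and A: "finite A" "A \<noteq> {}" "A \<subseteq> H"
  shows "gcdm \<phi> A \<le> 0 \<longleftrightarrow> gcdm \<psi> A \<le> 0"
proof -
  have z: "0 \<in> H" using sm by (simp add: submonoid_def)
  have "\<phi> 0 = 0" "\<psi> 0 = 0" using dt_hom(1)[OF d1] dt_hom(1)[OF d2] by (auto simp: monoid_hom_into_def)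
  moreover have "gcdm \<phi> A \<le> \<phi> 0 \<longleftrightarrow> gcdm \<psi> A \<le> \<psi> 0"
    using key_char[OF d1 sm A z] key_char[OF d2 sm A z] by blast
  ultimately show ?thesis by simp
qed

lemma dt_inj:
  assumes d1: "divisor_theory H P \<phi>" and d2: "divisor_theory H Q \<psi>" and sm: "submonoid H"
  shows "\<exists>f. inj_on f P \<and> f ` P \<subseteq> Q"
proof -
  have "\<forall>q\<in>Q. \<exists>B. finite B \<and> B \<noteq> {} \<and> B \<subseteq> H \<and> gcdm \<psi> B = unit_vec q"
    using d2 by (simp add: divisor_theory_alt)
  then obtain Bq where Bq: "\<And>q. q \<in> Q \<Longrightarrow> finite (Bq q) \<and> Bq q \<noteq> {} \<and> Bq q \<subseteq> H \<and> gcdm \<psi> (Bq q) = unit_vec q"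
    by metis
  have ex: "\<exists>q\<in>Q. gcdm \<phi> (Bq q) = unit_vec p" if p: "p \<in> P" for p
  proof -
    obtain A where A: "finite A" "A \<noteq> {}" "A \<subseteq> H" "gcdm \<phi> A = unit_vec p"
      using d1 p by (auto simp: divisor_theory_alt)
    have "\<not> gcdm \<phi> A \<le> 0" using A(4) by (auto simp: le_fun_def unit_vec_def)
    then have "\<not> gcdm \<psi> A \<le> 0" using equiv_dt0[OF d1 d2 sm A(1-3)] by simp
    then obtain q where q: "gcdm \<psi> A q > 0" by (auto simp: le_fun_def)
    obtain a where a: "a \<in> A" using A by blast
    have "gcdm \<psi> A q \<le> \<psi> a q" using a A by (simp add: gcdm_def)
    moreover have "\<psi> a \<in> free_monoid Q" using dt_hom(1)[OF d2] a A by (auto simp: monoid_hom_into_def)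
    ultimately have qQ: "q \<in> Q" using q by (auto simp: free_monoid_def)
    note B = Bq[OF qQ]
    have "gcdm \<psi> (Bq q) \<le> gcdm \<psi> A" using B q by (auto simp: le_fun_def unit_vec_def)
    then have le: "gcdm \<phi> (Bq q) \<le> unit_vec p"
      using equiv_dt[OF d1 d2 sm _ _ _ A(1-3), of "Bq q"] B A(4) by simp
    have "\<not> gcdm \<psi> (Bq q) \<le> 0" using B by (auto simp: le_fun_def unit_vec_def)
    then have "\<not> gcdm \<phi> (Bq q) \<le> 0" using equiv_dt0[OF d1 d2 sm, of "Bq q"] B by simp
    then obtain j where j: "gcdm \<phi> (Bq q) j > 0" by (auto simp: le_fun_def)
    have "gcdm \<phi> (Bq q) = unit_vec p"
    proof
      fix i
      have "gcdm \<phi> (Bq q) i \<le> unit_vec p i" "gcdm \<phi> (Bq q) j \<le> unit_vec p j"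
        using le by (auto simp: le_fun_def)
      then show "gcdm \<phi> (Bq q) i = unit_vec p i" using j
        by (cases "i = p"; cases "j = p") (auto simp: unit_vec_def)
    qed
    then show ?thesis using qQ by blast
  qed
  define f where "f p = (SOME q. q \<in> Q \<and> gcdm \<phi> (Bq q) = unit_vec p)" for p
  have f: "f p \<in> Q \<and> gcdm \<phi> (Bq (f p)) = unit_vec p" if "p \<in> P" for p
    unfolding f_def using someI_ex[OF ex[OF that, unfolded Bex_def]] .
  have "inj_on f P"
  proof
    fix p p' assume "p \<in> P" "p' \<in> P" "f p = f p'"
    then have "unit_vec p = unit_vec p'" using f by metis
    then show "p = p'" unfolding unit_vec_def by (metis zero_neq_one)
  qed
  moreover have "f ` P \<subseteq> Q" using f by auto
  ultimately show ?thesis by blast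
qed

lemma dt_card:
  assumes d1: "divisor_theory H P \<phi>" and d2: "divisor_theory H Q \<psi>" and sm: "submonoid H"
    and fin: "finite P"
  shows "finite Q \<and> card Q = card P"
proof -
  obtain f where f: "inj_on f P" "f ` P \<subseteq> Q" using dt_inj[OF d1 d2 sm] by blast
  obtain g where g: "inj_on g Q" "g ` Q \<subseteq> P" using dt_inj[OF d2 d1 sm] by blast
  have fq: "finite Q" using inj_on_finite[OF g fin] .
  show ?thesis using fq card_inj_on_le[OF f fq] card_inj_on_le[OF g fin] by simp
qed

lemma dt_transfer:
  assumes dt: "divisor_theory H I \<phi>" and bij: "bij_betw \<sigma> J I" and fin: "finite J"
  shows "divisor_theory H J (\<lambda>a j. if j \<in> J then \<phi> a (\<sigma> j) else 0)"
    (is "divisor_theory H J ?\<phi>")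
proof -
  have hom: "monoid_hom_into H (free_monoid I) \<phi>" and dh: "divisor_hom H (free_monoid I) \<phi>"
    using dt_hom[OF dt] by auto
  have out: "\<phi> a i = 0" if "a \<in> H" "i \<notin> I" for a i
    using hom that by (auto simp: monoid_hom_into_def free_monoid_def)
  have h2: "monoid_hom_into H (free_monoid J) ?\<phi>"
    using hom fin unfolding monoid_hom_into_def free_monoid_def
    by (auto simp: fun_eq_iff elim: finite_subset[rotated])
  have le: "\<phi> a \<le> \<phi> b" if "a \<in> H" "b \<in> H" "?\<phi> a \<le> ?\<phi> b" for a b
    unfolding le_fun_def
  proof
    fix i show "\<phi> a i \<le> \<phi> b i"
    proof (cases "i \<in> I")
      case True
      then obtain j where "j \<in> J" "i = \<sigma> j" using bij by (auto simp: bij_betw_def)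
      then show ?thesis using that(3) by (auto simp: le_fun_def dest: spec[of _ j])
    next
      case False then show ?thesis using out that by simp
    qed
  qed
  have "divisor_hom H (free_monoid J) ?\<phi>"
    unfolding dh_iff using h2 le dh[unfolded dh_iff] by blast
  moreover have "\<exists>A. finite A \<and> A \<noteq> {} \<and> A \<subseteq> H \<and> gcdm ?\<phi> A = unit_vec j" if j: "j \<in> J" for j
  proof -
    have "\<sigma> j \<in> I" using bij j by (auto simp: bij_betw_def)
    then obtain A where A: "finite A" "A \<noteq> {}" "A \<subseteq> H" "gcdm \<phi> A = unit_vec (\<sigma> j)"
      using dt by (auto simp: divisor_theory_alt)
    have "gcdm ?\<phi> A = unit_vec j"
    proof
      fix n
      show "gcdm ?\<phi> A n = unit_vec j n"
      proof (cases "n \<in> J")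
        case True
        have "gcdm ?\<phi> A n = gcdm \<phi> A (\<sigma> n)" using True by (simp add: gcdm_def)
        also have "\<dots> = unit_vec j n" using A(4) True j bij
          by (auto simp: unit_vec_def bij_betw_def inj_on_def)
        finally show ?thesis .
      next
        case False
        have "(\<lambda>a. ?\<phi> a n) ` A = {0}" using False A(2) by auto
        then show ?thesis using False j by (auto simp: gcdm_def unit_vec_def)
      qed
    qed
    then show ?thesis using A by blast
  qed
  ultimately show ?thesis by (simp add: divisor_theory_alt)
qed

lemma agg_mem: "a \<in> agglomerations V E r \<longleftrightarrow>
   (\<forall>x. x \<notin> Inl ` V \<union> Inr ` E \<longrightarrow> a x = 0) \<and> (\<forall>e\<in>E. \<forall>v\<in>r e. a (Inr e) \<le> a (Inl v))"
  by (simp add: agglomerations_def)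

lemma agg_submonoid: "submonoid (agglomerations V E r)"
  unfolding submonoid_def by (auto simp: agg_mem add_mono)

lemma agg_cancel: "cancellative_monoid (agglomerations V E r)"
  unfolding cancellative_monoid_def by simp

lemma agg_reduced: "reduced_monoid (agglomerations V E r)"
  unfolding reduced_monoid_def by (auto simp: fun_eq_iff)

lemma agg_fg:
  assumes fV: "finite V" and fE: "finite E"
  shows "finitely_generated_monoid (agglomerations V E r)"
proof -
  let ?H = "agglomerations V E r"
  define D where "D = Inl ` V \<union> Inr ` E"
  have fD: "finite D" using fV fE by (simp add: D_def)
  define S where "S = {f \<in> ?H. \<forall>x. f x \<le> 1}"
  have "S \<subseteq> (\<lambda>L x. if x \<in> L then 1 else 0) ` Pow D"
  proof
    fix f assume f: "f \<in> S"
    have f1: "\<forall>x. f x \<le> 1" using f by (simp add: S_def)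
    have eq: "f = (\<lambda>x. if x \<in> {x. f x = 1} then 1 else 0)"
    proof
      fix x have "f x \<le> 1" using f1 by blast
      then show "f x = (if x \<in> {x. f x = 1} then 1 else 0)" by auto
    qed
    have fH: "f \<in> ?H" using f by (simp add: S_def)
    then have z: "\<forall>x. x \<notin> D \<longrightarrow> f x = 0" unfolding agg_mem D_def by blast
    have sub: "{x. f x = 1} \<subseteq> D"
    proof
      fix x assume "x \<in> {x. f x = 1}"
      then show "x \<in> D" using z by (metis mem_Collect_eq zero_neq_one)
    qed
    show "f \<in> (\<lambda>L x. if x \<in> L then 1 else 0) ` Pow D"
      by (rule image_eqI[where x="{x. f x = 1}" and f="\<lambda>L x. if x \<in> L then 1 else 0", OF eq]) (use sub in simp)
  qed
  then have fS: "finite S" by (rule finite_subset) (simp add: fD)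
  have SH: "S \<subseteq> ?H" by (auto simp: S_def)
  have sub: "generated_monoid S \<subseteq> ?H"
  proof
    fix x assume "x \<in> generated_monoid S"
    then show "x \<in> ?H"
    proof (induction rule: generated_monoid.induct)
      case gen_zero then show ?case using agg_submonoid[of V E r] unfolding submonoid_def by blast
    next
      case (gen_add s x) then show ?case using agg_submonoid[of V E r] SH unfolding submonoid_def by blast
    qed
  qed
  have main: "\<And>a. a \<in> ?H \<Longrightarrow> (\<forall>x. a x \<le> M) \<Longrightarrow> a \<in> generated_monoid S" for M
  proof (induction M)
    case 0
    then have "a = 0" by (auto simp: fun_eq_iff)
    then show ?case by (simp only:) (rule generated_monoid.gen_zero)
  next
    case (Suc M)
    define s where "s = (\<lambda>x. min (a x) (1::nat))"
    define a' where "a' = (\<lambda>x. a x - min (a x) 1)"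
    have aH: "\<forall>x. x \<notin> Inl ` V \<union> Inr ` E \<longrightarrow> a x = 0" "\<forall>e\<in>E. \<forall>v\<in>r e. a (Inr e) \<le> a (Inl v)"
      using Suc.prems(1) unfolding agg_mem by blast+
    have "s \<in> ?H" unfolding agg_mem
    proof (intro conjI allI impI ballI)
      fix x assume "x \<notin> Inl ` V \<union> Inr ` E" then show "s x = 0" using aH(1) by (simp add: s_def)
    next
      fix e v assume "e \<in> E" "v \<in> r e"
      then have "a (Inr e) \<le> a (Inl v)" using aH(2) by blast
      then show "s (Inr e) \<le> s (Inl v)" unfolding s_def by (rule min.mono) simp
    qed
    then have sS: "s \<in> S" unfolding S_def s_def by simp
    have a'H: "a' \<in> ?H" unfolding agg_mem
    proof (intro conjI allI impI ballI)
      fix x assume "x \<notin> Inl ` V \<union> Inr ` E" then show "a' x = 0" using aH(1) by (simp add: a'_def)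
    next
      fix e v assume "e \<in> E" "v \<in> r e"
      then have "a (Inr e) \<le> a (Inl v)" using aH(2) by blast
      then show "a' (Inr e) \<le> a' (Inl v)" unfolding a'_def by (simp add: min_def diff_le_mono)
    qed
    have a'M: "\<forall>x. a' x \<le> M"
    proof
      fix x
      have "a x \<le> Suc M" using Suc.prems(2) by blast
      then show "a' x \<le> M" by (auto simp add: a'_def min_def)
    qed
    have "a' \<in> generated_monoid S" using Suc.IH a'H a'M by blast
    then have "s + a' \<in> generated_monoid S" by (rule generated_monoid.gen_add[OF sS])
    moreover have "s + a' = a" by (auto simp: fun_eq_iff s_def a'_def)
    ultimately show ?case by simp
  qed
  have "?H \<subseteq> generated_monoid S"
  proof
    fix a assume a: "a \<in> ?H"
    have "\<forall>x. a x \<le> sum a D"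
    proof
      fix x show "a x \<le> sum a D"
      proof (cases "x \<in> D")
        case True then show ?thesis using fD by (simp add: member_le_sum)
      next
        case False then show ?thesis using a by (simp add: agg_mem D_def)
      qed
    qed
    then show "a \<in> generated_monoid S" using main[of a "sum a D"] a by blast
  qed
  then show ?thesis unfolding finitely_generated_monoid_def using fS SH sub by blast
qed

definition I0 :: "'v set \<Rightarrow> 'e set \<Rightarrow> ('e \<Rightarrow> 'v set) \<Rightarrow> ('e + ('e \<times> 'v) + 'v) set" where
  "I0 V E r = Inl ` E \<union> Inr ` (Inl ` Sigma E r \<union> Inr ` isolated_vertices V E r)"

definition phi0 :: "'v set \<Rightarrow> 'e set \<Rightarrow> ('e \<Rightarrow> 'v set) \<Rightarrow> ('v + 'e \<Rightarrow> nat) \<Rightarrow> ('e + ('e \<times> 'v) + 'v) \<Rightarrow> nat" where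
  "phi0 V E r a k = (case k of Inl e \<Rightarrow> if e \<in> E then a (Inr e) else 0
     | Inr (Inl (e, v)) \<Rightarrow> if e \<in> E \<and> v \<in> r e then a (Inl v) - a (Inr e) else 0
     | Inr (Inr v) \<Rightarrow> if v \<in> isolated_vertices V E r then a (Inl v) else 0)"

lemma phi0_simps [simp]:
  "phi0 V E r a (Inl e) = (if e \<in> E then a (Inr e) else 0)"
  "phi0 V E r a (Inr (Inl (e, v))) = (if e \<in> E \<and> v \<in> r e then a (Inl v) - a (Inr e) else 0)"
  "phi0 V E r a (Inr (Inr v)) = (if v \<in> isolated_vertices V E r then a (Inl v) else 0)"
  by (simp_all add: phi0_def)

lemma I0_simps [simp]:
  "Inl e \<in> I0 V E r \<longleftrightarrow> e \<in> E"
  "Inr (Inl (e, v)) \<in> I0 V E r \<longleftrightarrow> e \<in> E \<and> v \<in> r e"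
  "Inr (Inr v) \<in> I0 V E r \<longleftrightarrow> v \<in> isolated_vertices V E r"
  by (auto simp: I0_def)

lemma iso_mem: "v \<in> isolated_vertices V E r \<longleftrightarrow> v \<in> V \<and> (\<forall>e\<in>E. v \<notin> r e)"
  by (simp add: isolated_vertices_def)

lemma gcdm_pair: "gcdm \<phi> {x, y} = (\<lambda>j. min (\<phi> x j) (\<phi> y j))"
  by (simp add: gcdm_def)

lemma gcdm_single: "gcdm \<phi> {x} = \<phi> x"
  by (simp add: gcdm_def)

lemma all_I0: "(\<And>e. P (Inl e)) \<Longrightarrow> (\<And>e v. P (Inr (Inl (e, v)))) \<Longrightarrow> (\<And>v. P (Inr (Inr v))) \<Longrightarrow> P k"
  by (metis obj_sumE surj_pair)

lemma I0_cases:
  obtains (1) e where "k = Inl e" | (2) e v where "k = Inr (Inl (e, v))" | (3) v where "k = Inr (Inr v)"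
  by (metis obj_sumE surj_pair)

lemma I0_card:
  fixes V :: "'v set" and E :: "'e set" and r :: "'e \<Rightarrow> 'v set"
  assumes g: "is_graph V E r"
  shows "finite (I0 V E r) \<and> card (I0 V E r) = 3 * card E + card (isolated_vertices V E r)"
proof -
  have fE: "finite E" and fV: "finite V" using g by (auto simp: is_graph_def)
  have fr: "\<And>e. e \<in> E \<Longrightarrow> finite (r e)" and cr: "\<And>e. e \<in> E \<Longrightarrow> card (r e) = 2"
    using g unfolding is_graph_def by (metis card.infinite zero_neq_numeral)+
  have fS: "finite (Sigma E r)" using fE fr by auto
  have fI: "finite (isolated_vertices V E r)" using fV by (auto simp: isolated_vertices_def)
  have cS: "card (Sigma E r) = 2 * card E" using card_SigmaI[OF fE, of r] fr cr by simp
  have "card (I0 V E r) = card (Inl ` E :: ('e + ('e \<times> 'v) + 'v) set) + card (Inr ` (Inl ` Sigma E r \<union> Inr ` isolated_vertices V E r) :: ('e + ('e \<times> 'v) + 'v) set)"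
    unfolding I0_def using fE fS fI by (intro card_Un_disjoint) auto
  also have "\<dots> = card E + card (Inl ` Sigma E r \<union> Inr ` isolated_vertices V E r :: (('e \<times> 'v) + 'v) set)"
    by (simp add: card_image)
  also have "card (Inl ` Sigma E r \<union> Inr ` isolated_vertices V E r :: (('e \<times> 'v) + 'v) set) = card (Sigma E r) + card (isolated_vertices V E r)"
    using fS fI by (subst card_Un_disjoint) (auto simp: card_image)
  finally show ?thesis using cS fE fS fI by (simp add: I0_def)
qed

lemma phi0_dt:
  fixes V :: "'v set" and E :: "'e set" and r :: "'e \<Rightarrow> 'v set"
  assumes g: "is_graph V E r"
  shows "divisor_theory (agglomerations V E r) (I0 V E r) (phi0 V E r)"
proof -
  let ?H = "agglomerations V E r"
  have re: "\<And>e. e \<in> E \<Longrightarrow> r e \<subseteq> V" using g by (simp add: is_graph_def)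
  have fin: "finite (I0 V E r)" using I0_card[OF g] by simp
  have out: "phi0 V E r a k = 0" if "k \<notin> I0 V E r" for a k
    using that by (induction k rule: all_I0) auto
  have hom: "monoid_hom_into ?H (free_monoid (I0 V E r)) (phi0 V E r)"
    unfolding monoid_hom_into_def
  proof (intro conjI ballI)
    fix a
    have "{k. phi0 V E r a k \<noteq> 0} \<subseteq> I0 V E r" using out by (metis (mono_tags) mem_Collect_eq subsetI)
    then show "phi0 V E r a \<in> free_monoid (I0 V E r)"
      unfolding free_monoid_def using fin by (auto elim: finite_subset)
  next
    show "phi0 V E r 0 = 0"
    proof
      fix k show "phi0 V E r 0 k = 0 k" by (induction k rule: all_I0) auto
    qed
  next
    fix a b assume a: "a \<in> ?H" and b: "b \<in> ?H"
    show "phi0 V E r (a + b) = phi0 V E r a + phi0 V E r b"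
    proof
      fix k show "phi0 V E r (a + b) k = (phi0 V E r a + phi0 V E r b) k"
        using a b by (induction k rule: all_I0) (auto simp: agg_mem)
    qed
  qed
  have div: "dvdH ?H a b" if a: "a \<in> ?H" and b: "b \<in> ?H" and le: "phi0 V E r a \<le> phi0 V E r b" for a b
  proof -
    have lek: "\<And>k. phi0 V E r a k \<le> phi0 V E r b k" using le by (simp add: le_fun_def)
    have ab: "a x \<le> b x" for x
    proof (cases x)
      case (Inr e)
      then show ?thesis using lek[of "Inl e"] a by (cases "e \<in> E") (auto simp: agg_mem)
    next
      case (Inl v)
      show ?thesis
      proof (cases "v \<in> V")
        case False then show ?thesis using a Inl by (auto simp: agg_mem)
      next
        case True
        show ?thesis
        proof (cases "v \<in> isolated_vertices V E r")
          case True then show ?thesis using lek[of "Inr (Inr v)"] Inl by simp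
        next
          case False
          then obtain e where e: "e \<in> E" "v \<in> r e" using True by (auto simp: iso_mem)
          have "a (Inr e) \<le> a (Inl v)" "b (Inr e) \<le> b (Inl v)" using a b e by (auto simp: agg_mem)
          moreover have "a (Inr e) \<le> b (Inr e)" using lek[of "Inl e"] e by simp
          moreover have "a (Inl v) - a (Inr e) \<le> b (Inl v) - b (Inr e)"
            using lek[of "Inr (Inl (e, v))"] e by simp
          ultimately have "a (Inl v) \<le> b (Inl v)" by linarith
          then show ?thesis using Inl by simp
        qed
      qed
    qed
    define c where "c = (\<lambda>x. b x - a x)"
    have "c \<in> ?H" unfolding agg_mem
    proof (intro conjI allI impI ballI)
      fix x assume "x \<notin> Inl ` V \<union> Inr ` E"
      then show "c x = 0" using b by (simp add: agg_mem c_def)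
    next
      fix e v assume e: "e \<in> E" "v \<in> r e"
      have "a (Inr e) \<le> a (Inl v)" "b (Inr e) \<le> b (Inl v)" using a b e by (auto simp: agg_mem)
      moreover have "a (Inl v) - a (Inr e) \<le> b (Inl v) - b (Inr e)"
        using lek[of "Inr (Inl (e, v))"] e by simp
      moreover have "a (Inr e) \<le> b (Inr e)" using ab by blast
      ultimately show "c (Inr e) \<le> c (Inl v)" unfolding c_def by linarith
    qed
    moreover have "b = a + c" using ab by (auto simp: fun_eq_iff c_def)
    ultimately show ?thesis unfolding dvdH_def by blast
  qed
  have dh: "divisor_hom ?H (free_monoid (I0 V E r)) (phi0 V E r)"
    unfolding dh_iff using hom div by blast
  define ones :: "'v + 'e \<Rightarrow> nat" where "ones = (\<lambda>x. if x \<in> Inl ` V \<union> Inr ` E then 1 else (0::nat))"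
  have ones: "ones \<in> ?H" using re by (auto simp: agg_mem ones_def)
  have gen: "\<exists>A. finite A \<and> A \<noteq> {} \<and> A \<subseteq> ?H \<and> gcdm (phi0 V E r) A = unit_vec k"
    if k: "k \<in> I0 V E r" for k
  proof (cases k rule: I0_cases)
    case (1 e)
    then have e: "e \<in> E" using k by simp
    define a1 :: "'v + 'e \<Rightarrow> nat" where "a1 = (\<lambda>x. if x = Inr e \<or> x \<in> Inl ` r e then 1 else (0::nat))"
    have a1: "a1 \<in> ?H" using re e by (auto simp: agg_mem a1_def)
    have "gcdm (phi0 V E r) {a1, ones} = unit_vec k"
      unfolding gcdm_pair
    proof
      fix j show "min (phi0 V E r a1 j) (phi0 V E r ones j) = unit_vec k j"
        using e re 1 by (induction j rule: all_I0) (auto simp: a1_def ones_def unit_vec_def iso_mem)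
    qed
    then show ?thesis using a1 ones by (intro exI[of _ "{a1, ones}"]) auto
  next
    case (2 e v)
    then have e: "e \<in> E" "v \<in> r e" using k by auto
    define x1 :: "'v + 'e \<Rightarrow> nat" where "x1 = (\<lambda>x. if x = Inl v then 1 else (0::nat))"
    define x2 :: "'v + 'e \<Rightarrow> nat" where "x2 = (\<lambda>x. if x \<in> Inl ` V \<union> Inr ` (E - {e}) then 1 else (0::nat))"
    have x1: "x1 \<in> ?H" using re e by (auto simp: agg_mem x1_def)
    have x2: "x2 \<in> ?H" using re e by (auto simp: agg_mem x2_def)
    have "gcdm (phi0 V E r) {x1, x2} = unit_vec k"
      unfolding gcdm_pair
    proof
      fix j show "min (phi0 V E r x1 j) (phi0 V E r x2 j) = unit_vec k j"
        using e re 2 by (induction j rule: all_I0) (auto simp: x1_def x2_def unit_vec_def iso_mem)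
    qed
    then show ?thesis using x1 x2 by (intro exI[of _ "{x1, x2}"]) auto
  next
    case (3 v)
    then have v: "v \<in> V" "\<forall>e\<in>E. v \<notin> r e" using k by (auto simp: iso_mem)
    define x1 :: "'v + 'e \<Rightarrow> nat" where "x1 = (\<lambda>x. if x = Inl v then 1 else (0::nat))"
    have x1: "x1 \<in> ?H" using v by (auto simp: agg_mem x1_def)
    have "gcdm (phi0 V E r) {x1} = unit_vec k"
      unfolding gcdm_single
    proof
      fix j show "phi0 V E r x1 j = unit_vec k j"
        using v 3 by (induction j rule: all_I0) (auto simp: x1_def unit_vec_def iso_mem)
    qed
    then show ?thesis using x1 by (intro exI[of _ "{x1}"]) auto
  qed
  show ?thesis unfolding divisor_theory_alt using dh gen by blast
qed

theorem theorem4p6: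
  fixes V :: "'v set" and E :: "'e set" and r :: "'e \<Rightarrow> 'v set"
  assumes "is_graph V E r"
  shows "finitely_generated_monoid (agglomerations V E r)
       \<and> reduced_monoid (agglomerations V E r)
       \<and> krull_monoid TYPE(nat) (agglomerations V E r)
       \<and> (\<exists>(I::nat set) \<phi>. divisor_theory (agglomerations V E r) I \<phi>
             \<and> finite I \<and> card I = 3 * card E + card (isolated_vertices V E r))
       \<and> (\<forall>(I::'i set) \<phi>. divisor_theory (agglomerations V E r) I \<phi> \<longrightarrow>
             finite I \<and> card I = 3 * card E + card (isolated_vertices V E r))"
proof -
  let ?H = "agglomerations V E r"
  let ?N = "3 * card E + card (isolated_vertices V E r)"
  have g: "is_graph V E r" by fact
  have fV: "finite V" and fE: "finite E" using g by (auto simp: is_graph_def)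
  have dt0: "divisor_theory ?H (I0 V E r) (phi0 V E r)" using phi0_dt[OF g] .
  have c0: "finite (I0 V E r)" "card (I0 V E r) = ?N" using I0_card[OF g] by auto
  obtain h where h: "bij_betw h {0..<card (I0 V E r)} (I0 V E r)"
    using ex_bij_betw_nat_finite[OF c0(1)] by blast
  define \<phi>n where "\<phi>n = (\<lambda>a j. if j \<in> {0..<card (I0 V E r)} then phi0 V E r a (h j) else 0)"
  have dtn: "divisor_theory ?H {0..<card (I0 V E r)} \<phi>n"
    unfolding \<phi>n_def using dt_transfer[OF dt0 h] by simp
  have ex: "\<exists>(I::nat set) \<phi>. divisor_theory ?H I \<phi> \<and> finite I \<and> card I = ?N"
    using dtn c0 by (intro exI[of _ "{0..<card (I0 V E r)}"] exI[of _ \<phi>n]) simp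
  have kr: "krull_monoid TYPE(nat) ?H"
    unfolding krull_monoid_def using agg_submonoid agg_cancel dtn
    by (auto simp: divisor_theory_def)
  have un: "\<forall>(I::'i set) \<phi>. divisor_theory ?H I \<phi> \<longrightarrow> finite I \<and> card I = ?N"
  proof (intro allI impI)
    fix I :: "'i set" and \<phi> assume "divisor_theory ?H I \<phi>"
    then show "finite I \<and> card I = ?N" using dt_card[OF dt0 _ agg_submonoid c0(1)] c0(2) by metis
  qed
  show ?thesis using agg_fg[OF fV fE] agg_reduced kr ex un by blast
qed

end
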